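(* Let $(M,\rho)$ be a metric space and $f:[a,b]\to M$ continuous. Suppose $md(f,x)$ exists for all $x\in[a,b]$ except for an at most countable set of points, and $x\mapsto md(f,x)$ is Lebesgue integrable on $[a,b]$. Then $f$ is absolutely continuous on $[a,b]$.
   Context: $md(f,x)=\lim_{t\to0,\ x+t\in[a,b]}\rho(f(x+t),f(x))/|t|$ when it exists. Absolute continuity of $f$: for every $\varepsilon>0$ there is $\delta>0$ such that for non-overlapping intervals $[a_i,b_i]\subset[a,b]$ with $\sum_i(b_i-a_i)<\delta$ one has $\sum_i\rho(f(b_i),f(a_i))<\varepsilon$. *)

theory Defs
  imports "HOL-Analysis.Analysis"
begin

definition md_exists :: "(real \<Rightarrow> 'a::metric_space) \<Rightarrow> real \<Rightarrow> real \<Rightarrow> real \<Rightarrow> bool" where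
  "md_exists f a b x \<longleftrightarrow>
     (\<exists>L. ((\<lambda>t. dist (f (x + t)) (f x) / \<bar>t\<bar>) \<longlongrightarrow> L)
            (at 0 within {t. x + t \<in> {a..b}}))"

definition md :: "(real \<Rightarrow> 'a::metric_space) \<Rightarrow> real \<Rightarrow> real \<Rightarrow> real \<Rightarrow> real" where
  "md f a b x = Lim (at 0 within {t. x + t \<in> {a..b}}) (\<lambda>t. dist (f (x + t)) (f x) / \<bar>t\<bar>)"

definition abs_continuous_on_interval :: "real \<Rightarrow> real \<Rightarrow> (real \<Rightarrow> 'a::metric_space) \<Rightarrow> bool" where
  "abs_continuous_on_interval a b f \<longleftrightarrow>
     (\<forall>\<epsilon>>0. \<exists>\<delta>>0. \<forall>(n::nat) (u::nat \<Rightarrow> real) (v::nat \<Rightarrow> real).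
        (\<forall>i<n. a \<le> u i \<and> u i \<le> v i \<and> v i \<le> b) \<longrightarrow>
        (\<forall>i<n. \<forall>j<n. i \<noteq> j \<longrightarrow> {u i<..<v i} \<inter> {u j<..<v j} = {}) \<longrightarrow>
        (\<Sum>i<n. v i - u i) < \<delta> \<longrightarrow>
        (\<Sum>i<n. dist (f (v i)) (f (u i))) < \<epsilon>)"

end

theory Submission
  imports Defs
begin


lemma tdiv_interval:
  assumes D: "D tagged_division_of {u..v::real}" and p: "(x,K) \<in> D"
  shows "K = {Inf K..Sup K} \<and> Inf K \<le> x \<and> x \<le> Sup K"
proof -
  obtain c d where K: "K = cbox c d" using tagged_division_ofD(4)[OF D p] by blast
  have "x \<in> K" using tagged_division_ofD(2)[OF D p] .
  then have cd: "c \<le> d" "c \<le> x" "x \<le> d" using K by auto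
  then show ?thesis using K by auto
qed

lemma sum_ind_real: "finite A \<Longrightarrow> (\<Sum>x\<in>A. indicator B x :: real) = real (card (A \<inter> B))"
  by (simp add: indicator_def sum.If_cases Int_def)

lemma tag_group:
  fixes f :: "real \<Rightarrow> 'a::metric_space"
  assumes D: "D tagged_division_of {u..v}"
    and bnd: "\<And>K. (y,K) \<in> D \<Longrightarrow> dist (f (Sup K)) (f (Inf K)) \<le> \<eta>"
    and e0: "\<eta> \<ge> 0"
  shows "(\<Sum>p\<in>{p\<in>D. fst p = y}. dist (f (Sup (snd p))) (f (Inf (snd p)))) \<le> 2*\<eta>"
proof -
  let ?P = "{p\<in>D. fst p = y}"
  let ?d = "\<lambda>p. dist (f (Sup (snd p))) (f (Inf (snd p)))"
  let ?P1 = "{p\<in>?P. Inf (snd p) < y}"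
  let ?P2 = "{p\<in>?P. y < Sup (snd p)}"
  have fin: "finite ?P" using tagged_division_ofD(1)[OF D] by simp
  have c1: "card ?P1 \<le> 1"
  proof -
    have "\<forall>p\<in>?P1. \<forall>q\<in>?P1. p = q"
    proof (intro ballI, rule ccontr)
      fix p q assume p: "p \<in> ?P1" and q: "q \<in> ?P1" and ne: "p \<noteq> q"
      obtain K1 where p': "p = (y,K1)" using p by (cases p) auto
      obtain K2 where q': "q = (y,K2)" using q by (cases q) auto
      have i1: "K1 = {Inf K1..Sup K1} \<and> Inf K1 \<le> y \<and> y \<le> Sup K1" using tdiv_interval[OF D] p p' by auto
      have i2: "K2 = {Inf K2..Sup K2} \<and> Inf K2 \<le> y \<and> y \<le> Sup K2" using tdiv_interval[OF D] q q' by auto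
      have l1: "Inf K1 < y" and l2: "Inf K2 < y" using p p' q q' by auto
      define z where "z = (max (Inf K1) (Inf K2) + y)/2"
      have "z \<in> interior K1"
        proof -
          have "interior K1 = {Inf K1<..<Sup K1}" by (metis i1 interior_atLeastAtMost_real)
          then show ?thesis using i1 l1 l2 by (auto simp: z_def)
        qed
      moreover have "z \<in> interior K2"
        proof -
          have "interior K2 = {Inf K2<..<Sup K2}" by (metis i2 interior_atLeastAtMost_real)
          then show ?thesis using i2 l1 l2 by (auto simp: z_def)
        qed
      moreover have "interior K1 \<inter> interior K2 = {}"
        using tagged_division_ofD(5)[OF D, of y K1 y K2] p q p' q' ne by auto
      ultimately show False by auto
    qed
    moreover have "finite ?P1" by (rule finite_subset[OF _ fin]) auto
    ultimately show ?thesis using card_le_Suc0_iff_eq[of ?P1] by simp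
  qed
  have c2: "card ?P2 \<le> 1"
  proof -
    have "\<forall>p\<in>?P2. \<forall>q\<in>?P2. p = q"
    proof (intro ballI, rule ccontr)
      fix p q assume p: "p \<in> ?P2" and q: "q \<in> ?P2" and ne: "p \<noteq> q"
      obtain K1 where p': "p = (y,K1)" using p by (cases p) auto
      obtain K2 where q': "q = (y,K2)" using q by (cases q) auto
      have i1: "K1 = {Inf K1..Sup K1} \<and> Inf K1 \<le> y \<and> y \<le> Sup K1" using tdiv_interval[OF D] p p' by auto
      have i2: "K2 = {Inf K2..Sup K2} \<and> Inf K2 \<le> y \<and> y \<le> Sup K2" using tdiv_interval[OF D] q q' by auto
      have l1: "y < Sup K1" and l2: "y < Sup K2" using p p' q q' by auto
      define z where "z = (min (Sup K1) (Sup K2) + y)/2"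
      have "z \<in> interior K1"
        proof -
          have "interior K1 = {Inf K1<..<Sup K1}" by (metis i1 interior_atLeastAtMost_real)
          then show ?thesis using i1 l1 l2 by (auto simp: z_def)
        qed
      moreover have "z \<in> interior K2"
        proof -
          have "interior K2 = {Inf K2<..<Sup K2}" by (metis i2 interior_atLeastAtMost_real)
          then show ?thesis using i2 l1 l2 by (auto simp: z_def)
        qed
      moreover have "interior K1 \<inter> interior K2 = {}"
        using tagged_division_ofD(5)[OF D, of y K1 y K2] p q p' q' ne by auto
      ultimately show False by auto
    qed
    moreover have "finite ?P2" by (rule finite_subset[OF _ fin]) auto
    ultimately show ?thesis using card_le_Suc0_iff_eq[of ?P2] by simp
  qed
  have pw: "?d p \<le> \<eta> * indicator ?P1 p + \<eta> * indicator ?P2 p" if pP: "p \<in> ?P" for p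
  proof -
    obtain K where p': "p = (y,K)" using pP by (cases p) auto
    have i: "K = {Inf K..Sup K} \<and> Inf K \<le> y \<and> y \<le> Sup K" using tdiv_interval[OF D] pP p' by auto
    have b: "?d p \<le> \<eta>" using bnd pP p' by auto
    show ?thesis
    proof (cases "Inf K < y \<or> y < Sup K")
      case True
      then show ?thesis using b e0 pP p' by (auto simp: indicator_def)
    next
      case False
      then have "Inf K = Sup K" using i by auto
      then show ?thesis using p' e0 by (simp add: indicator_def)
    qed
  qed
  have "(\<Sum>p\<in>?P. ?d p) \<le> (\<Sum>p\<in>?P. \<eta> * indicator ?P1 p + \<eta> * indicator ?P2 p)"
    by (rule sum_mono) (use pw in auto)
  also have "\<dots> = \<eta> * card ?P1 + \<eta> * card ?P2"
  proof -
    have "(\<Sum>p\<in>?P. indicator ?P1 p :: real) = card ?P1"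
      using fin by (subst sum_ind_real) (auto intro!: arg_cong[where f=card])
    moreover have "(\<Sum>p\<in>?P. indicator ?P2 p :: real) = card ?P2"
      using fin by (subst sum_ind_real) (auto intro!: arg_cong[where f=card])
    ultimately show ?thesis by (simp add: sum.distrib sum_distrib_left[symmetric])
  qed
  also have "\<dots> \<le> 2 * \<eta>"
  proof -
    have "\<eta> * card ?P1 \<le> \<eta>" using c1 e0 by (simp add: mult_left_le)
    moreover have "\<eta> * card ?P2 \<le> \<eta>" using c2 e0 by (simp add: mult_left_le)
    ultimately show ?thesis by simp
  qed
  finally show ?thesis .
qed


lemma geo_bound:
  assumes E: "countable E" and T: "finite T" "T \<subseteq> E"
  shows "(\<Sum>y\<in>T. (1/2::real)^(to_nat_on E y)) \<le> 2"
proof -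
  have inj: "inj_on (to_nat_on E) T" using inj_on_subset[OF inj_on_to_nat_on[OF E] T(2)] .
  have "(\<Sum>y\<in>T. (1/2::real)^(to_nat_on E y)) = (\<Sum>n\<in>to_nat_on E ` T. (1/2::real)^n)"
    using sum.reindex[OF inj, of "\<lambda>n. (1/2::real)^n"] by (simp add: comp_def)
  also have "\<dots> \<le> (\<Sum>n. (1/2::real)^n)"
    by (rule sum_le_suminf) (use T in \<open>auto intro: summable_geometric\<close>)
  also have "\<dots> = 2" using suminf_geometric[of "1/2::real"] by simp
  finally show ?thesis .
qed

lemma key_ineq:
  fixes f :: "real \<Rightarrow> 'a::metric_space" and g :: "real \<Rightarrow> real"
  assumes cont: "continuous_on {u..v} f" and uv: "u \<le> v"
    and E: "countable E"
    and lim: "\<And>x e. x \<in> {u..v} - E \<Longrightarrow> e > 0 \<Longrightarrow> \<exists>d>0. \<forall>y\<in>{u..v}. \<bar>y - x\<bar> < d \<longrightarrow> dist (f y) (f x) \<le> (g x + e) * \<bar>y - x\<bar>"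
    and gi: "(g has_integral I) {u..v}"
  shows "dist (f v) (f u) \<le> I"
proof (rule field_le_epsilon)
  fix e :: real assume e: "e > 0"
  define h where "h x = (if x \<in> E then 0 else g x)" for x
  have negE: "negligible E"
  proof -
    have "negligible (\<Union>((\<lambda>x. {x}) ` E))"
      by (rule negligible_countable_Union) (use E in auto)
    then show ?thesis by simp
  qed
  have hi: "(h has_integral I) {u..v}"
    by (rule has_integral_spike[OF negE _ gi]) (auto simp: h_def)
  define \<epsilon> where "\<epsilon> = e / (4 * (v - u + 1))"
  have \<epsilon>0: "\<epsilon> > 0" using e uv by (simp add: \<epsilon>_def)
  define \<eta> where "\<eta> y = (e/16) * (1/2::real)^(to_nat_on E y)" for y
  have \<eta>0: "\<eta> y > 0" for y using e by (simp add: \<eta>_def)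
  obtain \<gamma>1 where g1: "gauge \<gamma>1"
    and g1D: "\<And>D. D tagged_division_of {u..v} \<Longrightarrow> \<gamma>1 fine D \<Longrightarrow>
       norm ((\<Sum>(x,K)\<in>D. Henstock_Kurzweil_Integration.content K *\<^sub>R h x) - I) < e/4"
    using hi[unfolded has_integral box_real(2)[symmetric]] e
    by (metis (no_types, lifting) divide_pos_pos zero_less_numeral box_real(2))
  have "\<forall>x\<in>{u..v}. \<exists>d>0. \<forall>y\<in>{u..v}. dist y x < d \<longrightarrow> dist (f y) (f x) < \<eta> x / 2"
    using cont \<eta>0 unfolding continuous_on_iff by (meson half_gt_zero)
  then obtain dE where dE: "\<And>x. x \<in> {u..v} \<Longrightarrow> dE x > 0 \<and> (\<forall>y\<in>{u..v}. dist y x < dE x \<longrightarrow> dist (f y) (f x) < \<eta> x / 2)"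
    by metis
  have "\<forall>x\<in>{u..v} - E. \<exists>d>0. \<forall>y\<in>{u..v}. \<bar>y - x\<bar> < d \<longrightarrow> dist (f y) (f x) \<le> (g x + \<epsilon>) * \<bar>y - x\<bar>"
    using lim \<epsilon>0 by blast
  then obtain dM where dM: "\<And>x. x \<in> {u..v} - E \<Longrightarrow> dM x > 0 \<and> (\<forall>y\<in>{u..v}. \<bar>y - x\<bar> < dM x \<longrightarrow> dist (f y) (f x) \<le> (g x + \<epsilon>) * \<bar>y - x\<bar>)"
    by metis
  define r where "r x = (if x \<in> {u..v} then (if x \<in> E then dE x else dM x) else 1)" for x
  have r0: "\<forall>x. r x > 0" using dE dM by (auto simp: r_def)
  have g: "gauge (\<lambda>x. \<gamma>1 x \<inter> ball x (r x))"
    by (rule gauge_Int[OF g1 gauge_ball_dependent[OF r0]])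
  obtain D where D: "D tagged_division_of {u..v}" and Df: "(\<lambda>x. \<gamma>1 x \<inter> ball x (r x)) fine D"
    using fine_division_exists_real[OF g] by blast
  have Df1: "\<gamma>1 fine D" and Df2: "(\<lambda>x. ball x (r x)) fine D" using Df[unfolded fine_Int] by auto
  have finD: "finite D" using tagged_division_ofD(1)[OF D] .
  let ?d = "\<lambda>K. dist (f (Sup K)) (f (Inf K))"
  have Kprops: "K = {Inf K..Sup K} \<and> Inf K \<le> x \<and> x \<le> Sup K \<and> K \<subseteq> {u..v} \<and> K \<subseteq> ball x (r x) \<and> x \<in> {u..v}"
    if "(x,K) \<in> D" for x K
    using tdiv_interval[OF D that] tagged_division_ofD(2,3)[OF D that] Df2 that
    by (auto simp: fine_def)
  have "dist (f v) (f u) = (\<Sum>(x,K)\<in>D. dist (f (Sup K)) (f u) - dist (f (Inf K)) (f u))"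
    using additive_tagged_division_1[OF uv D, of "\<lambda>y. dist (f y) (f u)"] by simp
  also have "\<dots> \<le> (\<Sum>(x,K)\<in>D. ?d K)"
    by (rule sum_mono) (smt (verit) case_prod_beta dist_triangle)
  also have "\<dots> = (\<Sum>p\<in>D. if fst p \<in> E then ?d (snd p) else 0) + (\<Sum>p\<in>D. if fst p \<in> E then 0 else ?d (snd p))"
    by (subst sum.distrib[symmetric]) (auto intro!: sum.cong)
  also have "\<dots> \<le> e/4 + (I + e/4 + e/4)"
  proof (rule add_mono)
    show "(\<Sum>p\<in>D. if fst p \<in> E then ?d (snd p) else 0) \<le> e/4"
      proof -
      let ?T = "fst ` {p\<in>D. fst p \<in> E}"
      have "(\<Sum>p\<in>D. if fst p \<in> E then ?d (snd p) else 0) = (\<Sum>p\<in>{p\<in>D. fst p \<in> E}. ?d (snd p))"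
        by (simp add: sum.inter_filter[OF finD])
      also have "\<dots> = (\<Sum>y\<in>?T. \<Sum>p\<in>{p\<in>{p\<in>D. fst p \<in> E}. fst p = y}. ?d (snd p))"
        by (rule sum.group[symmetric]) (use finD in auto)
      also have "\<dots> \<le> (\<Sum>y\<in>?T. 2 * \<eta> y)"
      proof (rule sum_mono)
        fix y assume y: "y \<in> ?T"
        then have yE: "y \<in> E" by auto
        have eq: "{p\<in>{p\<in>D. fst p \<in> E}. fst p = y} = {p\<in>D. fst p = y}" using yE by auto
        show "(\<Sum>p\<in>{p\<in>{p\<in>D. fst p \<in> E}. fst p = y}. ?d (snd p)) \<le> 2 * \<eta> y" unfolding eq
        proof (rule tag_group[OF D])
          fix K assume yK: "(y,K) \<in> D"
          note Kp = Kprops[OF yK]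
          have ry: "r y = dE y" using Kp yE by (simp add: r_def)
          have SK: "Sup K \<in> K" and IK: "Inf K \<in> K" using Kp by (metis atLeastAtMost_iff order_refl order_trans)+
          have yuv: "y \<in> {u..v}" using Kp by blast
          have "Sup K \<in> {u..v}" "Inf K \<in> {u..v}" using SK IK Kp by blast+
          moreover have "dist (Sup K) y < dE y" "dist (Inf K) y < dE y"
            using SK IK Kp ry by (auto simp: dist_commute subset_iff)
          ultimately have "dist (f (Sup K)) (f y) < \<eta> y / 2" "dist (f (Inf K)) (f y) < \<eta> y / 2"
            using dE[OF yuv] by auto
          then show "?d K \<le> \<eta> y"
            using dist_triangle[of "f (Sup K)" "f (Inf K)" "f y"] by (simp add: dist_commute)
        next
          show "\<eta> y \<ge> 0" using \<eta>0 less_imp_le by blast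
        qed
      qed
      also have "\<dots> = (e/8) * (\<Sum>y\<in>?T. (1/2::real)^(to_nat_on E y))"
        by (simp add: \<eta>_def sum_distrib_left)
      also have "\<dots> \<le> (e/8) * 2"
        by (rule mult_left_mono[OF geo_bound[OF E]]) (use finD e in auto)
      finally show ?thesis by simp
    qed
    show "(\<Sum>p\<in>D. if fst p \<in> E then 0 else ?d (snd p)) \<le> I + e/4 + e/4"
      proof -
      have "(\<Sum>p\<in>D. if fst p \<in> E then 0 else ?d (snd p)) \<le>
            (\<Sum>p\<in>D. Henstock_Kurzweil_Integration.content (snd p) * h (fst p) + \<epsilon> * Henstock_Kurzweil_Integration.content (snd p))"
      proof (rule sum_mono)
        fix p assume pD: "p \<in> D"
        obtain x K where p: "p = (x,K)" by (cases p)
        note Kp = Kprops[OF pD[unfolded p]]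
        have cK: "Henstock_Kurzweil_Integration.content K = Sup K - Inf K"
          using Kp by (metis content_real order_trans)
        show "(if fst p \<in> E then 0 else ?d (snd p)) \<le> Henstock_Kurzweil_Integration.content (snd p) * h (fst p) + \<epsilon> * Henstock_Kurzweil_Integration.content (snd p)"
        proof (cases "x \<in> E")
          case True
          then show ?thesis using p \<epsilon>0 cK Kp by (simp add: h_def)
        next
          case False
          have rx: "r x = dM x" using Kp False by (simp add: r_def)
          have xm: "x \<in> {u..v} - E" using Kp False by blast
          have SK: "Sup K \<in> K" and IK: "Inf K \<in> K" using Kp by (metis atLeastAtMost_iff order_refl order_trans)+
          have "Sup K \<in> {u..v}" "Inf K \<in> {u..v}" using SK IK Kp by blast+
          moreover have "\<bar>Sup K - x\<bar> < dM x" "\<bar>Inf K - x\<bar> < dM x"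
            using SK IK Kp rx by (auto simp: dist_real_def subset_iff abs_minus_commute)
          ultimately have 1: "dist (f (Sup K)) (f x) \<le> (g x + \<epsilon>) * \<bar>Sup K - x\<bar>"
            and 2: "dist (f (Inf K)) (f x) \<le> (g x + \<epsilon>) * \<bar>Inf K - x\<bar>"
            using dM[OF xm] by auto
          have "?d K \<le> (g x + \<epsilon>) * (Sup K - x) + (g x + \<epsilon>) * (x - Inf K)"
            using 1 2 Kp dist_triangle[of "f (Sup K)" "f (Inf K)" "f x"] by (simp add: dist_commute)
          also have "\<dots> = (g x + \<epsilon>) * (Sup K - Inf K)" by (simp add: algebra_simps)
          finally have "?d K \<le> (g x + \<epsilon>) * Henstock_Kurzweil_Integration.content K" by (simp only: cK)
          then show ?thesis using p False by (simp add: h_def algebra_simps)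
        qed
      qed
      also have "\<dots> = (\<Sum>(x,K)\<in>D. Henstock_Kurzweil_Integration.content K *\<^sub>R h x) + \<epsilon> * (\<Sum>(x,K)\<in>D. Henstock_Kurzweil_Integration.content K)"
        by (simp add: sum.distrib sum_distrib_left case_prod_beta)
      also have "\<dots> \<le> (I + e/4) + e/4"
      proof (rule add_mono)
        show "(\<Sum>(x,K)\<in>D. Henstock_Kurzweil_Integration.content K *\<^sub>R h x) \<le> I + e/4"
          using g1D[OF D Df1] unfolding real_norm_def real_scaleR_def abs_less_iff by linarith
        have "(\<Sum>(x,K)\<in>D. Henstock_Kurzweil_Integration.content K) = v - u"
          using additive_content_tagged_division[of D u v] D uv by simp
        moreover have "\<epsilon> * (v - u) \<le> e/4"
        proof -
          have "\<epsilon> * (v - u) = (e/4) * ((v - u) / (v - u + 1))" using uv by (simp add: \<epsilon>_def field_simps)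
          also have "\<dots> \<le> (e/4) * 1" using uv e by (intro mult_left_mono) auto
          finally show ?thesis by simp
        qed
        ultimately show "\<epsilon> * (\<Sum>(x,K)\<in>D. Henstock_Kurzweil_Integration.content K) \<le> e/4" by simp
      qed
      finally show ?thesis by simp
    qed
  qed
  finally show "dist (f v) (f u) \<le> I + e" using e by simp
qed


lemma ind_sum_le1:
  fixes u v :: "nat \<Rightarrow> real"
  assumes disj: "\<forall>i<n. \<forall>j<n. i \<noteq> j \<longrightarrow> {u i<..<v i} \<inter> {u j<..<v j} = {}"
  shows "(\<Sum>i<n. indicator {u i<..<v i} x :: real) \<le> 1"
proof -
  have "(\<Sum>i<n. indicator {u i<..<v i} x :: real) = (\<Sum>i<n. indicator {i. x \<in> {u i<..<v i}} i)"
    by (rule sum.cong) (auto simp: indicator_def)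
  also have "\<dots> = real (card ({..<n} \<inter> {i. x \<in> {u i<..<v i}}))"
    by (rule sum_ind_real) simp
  also have "\<dots> \<le> 1"
  proof -
    have "\<forall>i\<in>{..<n} \<inter> {i. x \<in> {u i<..<v i}}. \<forall>j\<in>{..<n} \<inter> {i. x \<in> {u i<..<v i}}. i = j"
      using disj by blast
    then have "card ({..<n} \<inter> {i. x \<in> {u i<..<v i}}) \<le> Suc 0"
      by (subst card_le_Suc0_iff_eq) auto
    then show ?thesis by simp
  qed
  finally show ?thesis .
qed

lemma abs_cont_sum:
  fixes G :: "real \<Rightarrow> real"
  assumes Gi: "integrable lborel G" and G0: "\<And>x. G x \<ge> 0" and e: "\<epsilon> > 0"
  shows "\<exists>\<delta>>0. \<forall>(n::nat) (u::nat\<Rightarrow>real) (v::nat\<Rightarrow>real). (\<forall>i<n. u i \<le> v i) \<longrightarrow>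
     (\<forall>i<n. \<forall>j<n. i \<noteq> j \<longrightarrow> {u i<..<v i} \<inter> {u j<..<v j} = {}) \<longrightarrow>
     (\<Sum>i<n. v i - u i) < \<delta> \<longrightarrow>
     (\<Sum>i<n. LINT x|lborel. indicator {u i<..<v i} x * G x) < \<epsilon>"
proof -
  have Gm: "G \<in> borel_measurable lborel" using borel_measurable_integrable[OF Gi] .
  have "(\<lambda>N::nat. LINT x|lborel. G x - min (G x) (real N)) \<longlonglongrightarrow> (LINT (x::real)|lborel. (0::real))"
  proof (rule integral_dominated_convergence[where s="\<lambda>N x. G x - min (G x) (real N)" and f="\<lambda>x. 0::real" and w=G and M=lborel])
    show "(\<lambda>x. 0::real) \<in> borel_measurable lborel" by simp
    show "(\<lambda>x. G x - min (G x) (real N)) \<in> borel_measurable lborel" for N using Gm by measurable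
    show "integrable lborel G" by (rule Gi)
    show "AE x in lborel. (\<lambda>N. G x - min (G x) (real N)) \<longlonglongrightarrow> 0"
    proof (rule AE_I2)
      fix x
      obtain N0 :: nat where "G x \<le> real N0" using real_arch_simple by blast
      then have "\<forall>N\<ge>N0. G x - min (G x) (real N) = 0"
        by (metis (no_types, opaque_lifting) diff_self min.absorb1 of_nat_le_iff order_trans)
      then show "(\<lambda>N. G x - min (G x) (real N)) \<longlonglongrightarrow> 0"
        by (intro tendsto_eventually) (auto simp: eventually_sequentially)
    qed
    show "AE x in lborel. norm (G x - min (G x) (real N)) \<le> G x" for N
      using G0 by (intro AE_I2) auto
  qed
  then have "(\<lambda>N::nat. LINT x|lborel. G x - min (G x) (real N)) \<longlonglongrightarrow> 0" by simp
  then have "eventually (\<lambda>N. (LINT x|lborel. G x - min (G x) (real N)) < \<epsilon>/2) sequentially"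
    using e by (intro order_tendstoD(2)) auto
  then obtain N :: nat where N: "(LINT x|lborel. G x - min (G x) (real N)) < \<epsilon>/2"
    unfolding eventually_sequentially by blast
  define \<delta> where "\<delta> = \<epsilon> / (2 * (real N + 1))"
  have \<delta>0: "\<delta> > 0" using e by (simp add: \<delta>_def)
  have Hi: "integrable lborel (\<lambda>x. G x - min (G x) (real N))"
  proof (rule Bochner_Integration.integrable_bound[OF Gi])
    show "(\<lambda>x. G x - min (G x) (real N)) \<in> borel_measurable lborel" using Gm by measurable
    show "AE x in lborel. norm (G x - min (G x) (real N)) \<le> norm (G x)" using G0 by (intro AE_I2) auto
  qed
  show ?thesis
  proof (intro exI[of _ \<delta>] conjI allI impI \<delta>0)
    fix n :: nat and u v :: "nat \<Rightarrow> real"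
    assume uv: "\<forall>i<n. u i \<le> v i"
      and disj: "\<forall>i<n. \<forall>j<n. i \<noteq> j \<longrightarrow> {u i<..<v i} \<inter> {u j<..<v j} = {}"
      and sm: "(\<Sum>i<n. v i - u i) < \<delta>"
    let ?H = "\<lambda>x. G x - min (G x) (real N)"
    have int1: "integrable lborel (\<lambda>x. indicator {u i<..<v i} x * ?H x)" for i
      using integrable_mult_indicator[OF _ Hi, of "{u i<..<v i}"] by simp
    have int2: "integrable lborel (\<lambda>x. real N * indicator {u i<..<v i} x :: real)" if "i < n" for i
      using uv that by (intro integrable_mult_right integrable_real_indicator) auto
    have bnd: "(LINT x|lborel. indicator {u i<..<v i} x * G x) \<le>
           (LINT x|lborel. indicator {u i<..<v i} x * ?H x) + real N * (v i - u i)" if i: "i < n" for i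
    proof -
      have "(LINT x|lborel. indicator {u i<..<v i} x * G x) \<le>
            (LINT x|lborel. indicator {u i<..<v i} x * ?H x + real N * indicator {u i<..<v i} x)"
      proof (rule integral_mono)
        show "integrable lborel (\<lambda>x. indicator {u i<..<v i} x * G x)"
          using integrable_mult_indicator[OF _ Gi, of "{u i<..<v i}"] by simp
        show "integrable lborel (\<lambda>x. indicator {u i<..<v i} x * ?H x + real N * indicator {u i<..<v i} x)"
          using int1 int2[OF i] by (rule Bochner_Integration.integrable_add)
        show "indicator {u i<..<v i} x * G x \<le> indicator {u i<..<v i} x * ?H x + real N * indicator {u i<..<v i} x" for x
          by (auto simp: indicator_def)
      qed
      also have "\<dots> = (LINT x|lborel. indicator {u i<..<v i} x * ?H x) + (LINT x|lborel. real N * indicator {u i<..<v i} x)"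
        using int1 int2[OF i] by (rule Bochner_Integration.integral_add)
      also have "(LINT x|lborel. real N * indicator {u i<..<v i} x) = real N * (v i - u i)"
        using uv i by (simp add: integral_indicator)
      finally show ?thesis .
    qed
    have "(\<Sum>i<n. LINT x|lborel. indicator {u i<..<v i} x * G x) \<le>
          (\<Sum>i<n. (LINT x|lborel. indicator {u i<..<v i} x * ?H x) + real N * (v i - u i))"
      by (rule sum_mono) (use bnd in auto)
    also have "\<dots> = (\<Sum>i<n. LINT x|lborel. indicator {u i<..<v i} x * ?H x) + real N * (\<Sum>i<n. v i - u i)"
      by (simp add: sum.distrib sum_distrib_left)
    also have "(\<Sum>i<n. LINT x|lborel. indicator {u i<..<v i} x * ?H x) = (LINT x|lborel. (\<Sum>i<n. indicator {u i<..<v i} x * ?H x))"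
      using Bochner_Integration.integral_sum[where I="{..<n}" and M=lborel and f="\<lambda>i x. indicator {u i<..<v i} x * ?H x", OF int1] by simp
    also have "\<dots> \<le> (LINT x|lborel. ?H x)"
    proof (rule integral_mono)
      show "integrable lborel (\<lambda>x. \<Sum>i<n. indicator {u i<..<v i} x * ?H x)"
        using int1 by (rule Bochner_Integration.integrable_sum)
      show "integrable lborel ?H" by (rule Hi)
      fix x
      have "(\<Sum>i<n. indicator {u i<..<v i} x * ?H x) = (\<Sum>i<n. indicator {u i<..<v i} x) * ?H x"
        by (simp add: sum_distrib_right)
      also have "\<dots> \<le> 1 * ?H x"
        using ind_sum_le1[of n u v x] disj G0[of x] by (intro mult_right_mono) auto
      finally show "(\<Sum>i<n. indicator {u i<..<v i} x * ?H x) \<le> ?H x" by simp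
    qed
    finally have "(\<Sum>i<n. LINT x|lborel. indicator {u i<..<v i} x * G x) \<le> (LINT x|lborel. ?H x) + real N * (\<Sum>i<n. v i - u i)"
      by simp
    moreover have "real N * (\<Sum>i<n. v i - u i) \<le> real N * \<delta>"
      using sm by (intro mult_left_mono) auto
    moreover have "real N * \<delta> < \<epsilon>/2"
      using e by (simp add: \<delta>_def field_simps)
    ultimately show "(\<Sum>i<n. LINT x|lborel. indicator {u i<..<v i} x * G x) < \<epsilon>"
      using N by linarith
  qed
qed

theorem theorem3p6:
  fixes f :: "real \<Rightarrow> 'a::metric_space" and a b :: real
  assumes "continuous_on {a..b} f"
    and "countable E"
    and "\<forall>x\<in>{a..b} - E. md_exists f a b x"
    and "set_integrable lborel {a..b} (md f a b)"
  shows "abs_continuous_on_interval a b f"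
proof -
  define G where "G x = indicator {a..b} x * \<bar>md f a b x\<bar>" for x
  have Si: "integrable lborel (\<lambda>x. indicator {a..b} x *\<^sub>R md f a b x)"
    using assms(4) by (simp add: set_integrable_def)
  have Gi: "integrable lborel G"
  proof -
    have "integrable lborel (\<lambda>x. \<bar>indicator {a..b} x *\<^sub>R md f a b x\<bar>)" using Si by (rule integrable_abs)
    moreover have "(\<lambda>x. \<bar>indicator {a..b} x *\<^sub>R md f a b x\<bar>) = G"
      by (rule ext) (simp add: G_def indicator_def)
    ultimately show ?thesis by simp
  qed
  have G0: "G x \<ge> 0" for x by (simp add: G_def)
  have interval: "dist (f v) (f u) \<le> (LINT x|lborel. indicator {u<..<v} x * G x)"
    if uvab: "a \<le> u" "u \<le> v" "v \<le> b" for u v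
  proof (cases "u = v")
    case True then show ?thesis by simp
  next
    case False
    then have uv: "u < v" using uvab by simp
    have Gis: "set_integrable lborel {u..v} G"
      unfolding set_integrable_def using integrable_mult_indicator[OF _ Gi, of "{u..v}"] by simp
    have Gio: "set_integrable lborel {u<..<v} G"
      unfolding set_integrable_def using integrable_mult_indicator[OF _ Gi, of "{u<..<v}"] by simp
    have gi: "(G has_integral integral {u..v} G) {u..v}"
      using set_borel_integral_eq_integral(1)[OF Gis] by (simp add: has_integral_integral)
    have "dist (f v) (f u) \<le> integral {u..v} G"
    proof (rule key_ineq[OF _ _ assms(2) _ gi])
      show "continuous_on {u..v} f" by (rule continuous_on_subset[OF assms(1)]) (use uvab in auto)
      show "u \<le> v" using uv by simp
      fix x e :: real assume x: "x \<in> {u..v} - E" and e: "e > 0"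
      then have xab: "x \<in> {a..b}" "x \<notin> E" using uvab by auto
      then obtain L where L: "((\<lambda>t. dist (f (x+t)) (f x) / \<bar>t\<bar>) \<longlongrightarrow> L) (at 0 within {t. x + t \<in> {a..b}})"
        using assms(3) unfolding md_exists_def by blast
      have nt: "at (0::real) within {t. x + t \<in> {a..b}} \<noteq> bot"
        unfolding not_trivial_limit_within_ball
      proof (intro allI impI)
        fix \<epsilon> :: real assume \<epsilon>: "\<epsilon> > 0"
        show "{t. x + t \<in> {a..b}} \<inter> ball 0 \<epsilon> - {0} \<noteq> {}"
        proof (cases "x < b")
          case True
          define t where "t = min (\<epsilon>/2) (b - x)"
          have "t \<in> {t. x + t \<in> {a..b}} \<inter> ball 0 \<epsilon> - {0}" using True \<epsilon> xab by (auto simp: t_def dist_real_def)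
          then show ?thesis by blast
        next
          case False
          then have xb: "x = b" using xab by auto
          define t where "t = - min (\<epsilon>/2) (b - a)"
          have "t \<in> {t. x + t \<in> {a..b}} \<inter> ball 0 \<epsilon> - {0}" using xb uv uvab \<epsilon> by (auto simp: t_def dist_real_def)
          then show ?thesis by blast
        qed
      qed
      have mdL: "md f a b x = L" unfolding md_def using tendsto_Lim[OF nt L] .
      have "eventually (\<lambda>t. dist (f (x+t)) (f x) / \<bar>t\<bar> < L + e) (at 0 within {t. x + t \<in> {a..b}})"
        using L e by (intro order_tendstoD(2)) auto
      then obtain d where d: "d > 0" and dP: "\<forall>t\<in>{t. x + t \<in> {a..b}}. t \<noteq> 0 \<and> dist t 0 < d \<longrightarrow> dist (f (x+t)) (f x) / \<bar>t\<bar> < L + e"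
        unfolding eventually_at by blast
      have GL: "L \<le> G x" using xab mdL by (simp add: G_def)
      show "\<exists>d>0. \<forall>y\<in>{u..v}. \<bar>y - x\<bar> < d \<longrightarrow> dist (f y) (f x) \<le> (G x + e) * \<bar>y - x\<bar>"
      proof (intro exI[of _ d] conjI ballI impI d)
        fix y assume y: "y \<in> {u..v}" and yd: "\<bar>y - x\<bar> < d"
        show "dist (f y) (f x) \<le> (G x + e) * \<bar>y - x\<bar>"
        proof (cases "y = x")
          case True then show ?thesis by simp
        next
          case False
          have "y - x \<in> {t. x + t \<in> {a..b}}" using y uvab by auto
          moreover have "y - x \<noteq> 0 \<and> dist (y - x) 0 < d" using False yd by (simp add: dist_real_def)
          ultimately have "dist (f (x + (y-x))) (f x) / \<bar>y - x\<bar> < L + e" using dP by blast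
          then have "dist (f y) (f x) < (L + e) * \<bar>y - x\<bar>" using False by (simp add: divide_less_eq)
          also have "\<dots> \<le> (G x + e) * \<bar>y - x\<bar>" using GL by (intro mult_right_mono) auto
          finally show ?thesis by simp
        qed
      qed
    qed
    also have "integral {u..v} G = integral {u<..<v} G" by (rule integral_open_interval_real)
    also have "\<dots> = set_lebesgue_integral lborel {u<..<v} G" using set_borel_integral_eq_integral(2)[OF Gio] by simp
    also have "\<dots> = (LINT x|lborel. indicator {u<..<v} x * G x)" by (simp add: set_lebesgue_integral_def)
    finally show ?thesis .
  qed
  show ?thesis
    unfolding abs_continuous_on_interval_def
  proof (intro allI impI)
    fix \<epsilon> :: real assume e: "\<epsilon> > 0"
    obtain \<delta> where \<delta>: "\<delta> > 0" and H: "\<forall>(n::nat) (u::nat\<Rightarrow>real) (v::nat\<Rightarrow>real). (\<forall>i<n. u i \<le> v i) \<longrightarrow>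
     (\<forall>i<n. \<forall>j<n. i \<noteq> j \<longrightarrow> {u i<..<v i} \<inter> {u j<..<v j} = {}) \<longrightarrow>
     (\<Sum>i<n. v i - u i) < \<delta> \<longrightarrow>
     (\<Sum>i<n. LINT x|lborel. indicator {u i<..<v i} x * G x) < \<epsilon>"
      using abs_cont_sum[OF Gi G0 e] by blast
    show "\<exists>\<delta>>0. \<forall>(n::nat) (u::nat \<Rightarrow> real) (v::nat \<Rightarrow> real).
        (\<forall>i<n. a \<le> u i \<and> u i \<le> v i \<and> v i \<le> b) \<longrightarrow>
        (\<forall>i<n. \<forall>j<n. i \<noteq> j \<longrightarrow> {u i<..<v i} \<inter> {u j<..<v j} = {}) \<longrightarrow>
        (\<Sum>i<n. v i - u i) < \<delta> \<longrightarrow>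
        (\<Sum>i<n. dist (f (v i)) (f (u i))) < \<epsilon>"
    proof (intro exI[of _ \<delta>] conjI allI impI \<delta>)
      fix n :: nat and u v :: "nat \<Rightarrow> real"
      assume A1: "\<forall>i<n. a \<le> u i \<and> u i \<le> v i \<and> v i \<le> b"
        and A2: "\<forall>i<n. \<forall>j<n. i \<noteq> j \<longrightarrow> {u i<..<v i} \<inter> {u j<..<v j} = {}"
        and A3: "(\<Sum>i<n. v i - u i) < \<delta>"
      have "(\<Sum>i<n. dist (f (v i)) (f (u i))) \<le> (\<Sum>i<n. LINT x|lborel. indicator {u i<..<v i} x * G x)"
        by (rule sum_mono) (use interval A1 in auto)
      also have "\<dots> < \<epsilon>" using H A1 A2 A3 by auto
      finally show "(\<Sum>i<n. dist (f (v i)) (f (u i))) < \<epsilon>" .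
    qed
  qed
qed

end
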